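(* Let $\theta^*\in\mathbb{R}^{n\times n}$ be given by $\theta^*_{ij}=1$ if $j>n/2$ and $0$ otherwise, and let $V^* = \mathrm{TV}(\theta^* )$. There is a universal constant $c>0$ such that $$\mathrm{GW}\big(T_{K(V^* )}(\theta^* )\cap B_{n,n}(1)\big) \geq c\,n^{1/4}.$$
   Context: $\mathrm{TV}(\theta)$ is the unnormalized total variation of $\theta$ (sum of absolute differences over horizontally/vertically adjacent entries), $K(V) = \{\theta\in\mathbb{R}^{n\times n}: \mathrm{TV}(\theta)\le V\}$, and $T_{K(V^* )}(\theta^* ) = \mathrm{Closure}(\mathrm{Cone}(\{\theta:\theta^*+\theta\in K(V^* )\}))$ is the tangent cone ($\mathrm{Cone}(S)$ the smallest cone containing $S$). $B_{n,n}(1)$ is the unit Frobenius ball in $\mathbb{R}^{n\times n}$. $\mathrm{GW}(A) = \mathbb{E}\sup_{v\in A}\langle Z,v\rangle$ with $Z$ having i.i.d. standard normal entries. *)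

theory Defs
  imports "HOL-Probability.Probability"
begin

text \<open>n x n real matrices are represented as functions nat \<Rightarrow> nat \<Rightarrow> real,
  with rows/columns indexed by 0..n-1; entries outside the index range are required to be 0.\<close>

definition mats :: "nat \<Rightarrow> (nat \<Rightarrow> nat \<Rightarrow> real) set" where
  "mats n = {\<theta>. \<forall>i j. \<not> (i < n \<and> j < n) \<longrightarrow> \<theta> i j = 0}"

definition TV :: "nat \<Rightarrow> (nat \<Rightarrow> nat \<Rightarrow> real) \<Rightarrow> real" where
  "TV n \<theta> = (\<Sum>i<n. \<Sum>j<n - 1. \<bar>\<theta> i (j+1) - \<theta> i j\<bar>)
           + (\<Sum>i<n - 1. \<Sum>j<n. \<bar>\<theta> (i+1) j - \<theta> i j\<bar>)"

definition K :: "nat \<Rightarrow> real \<Rightarrow> (nat \<Rightarrow> nat \<Rightarrow> real) set" where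
  "K n V = {\<theta> \<in> mats n. TV n \<theta> \<le> V}"

definition frob :: "nat \<Rightarrow> (nat \<Rightarrow> nat \<Rightarrow> real) \<Rightarrow> real" where
  "frob n \<theta> = sqrt (\<Sum>i<n. \<Sum>j<n. (\<theta> i j)\<^sup>2)"

definition cone_gen :: "(nat \<Rightarrow> nat \<Rightarrow> real) set \<Rightarrow> (nat \<Rightarrow> nat \<Rightarrow> real) set" where
  "cone_gen S = {(\<lambda>i j. t * s i j) | t s. t \<ge> 0 \<and> s \<in> S}"

definition mclosure :: "nat \<Rightarrow> (nat \<Rightarrow> nat \<Rightarrow> real) set \<Rightarrow> (nat \<Rightarrow> nat \<Rightarrow> real) set" where
  "mclosure n S = {\<theta> \<in> mats n. \<forall>\<epsilon>>0. \<exists>\<phi>\<in>S. frob n (\<lambda>i j. \<theta> i j - \<phi> i j) < \<epsilon>}"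

definition tangent_cone :: "nat \<Rightarrow> real \<Rightarrow> (nat \<Rightarrow> nat \<Rightarrow> real) \<Rightarrow> (nat \<Rightarrow> nat \<Rightarrow> real) set" where
  "tangent_cone n V \<theta>s =
     mclosure n (cone_gen {\<theta> \<in> mats n. (\<lambda>i j. \<theta>s i j + \<theta> i j) \<in> K n V})"

definition unit_ball :: "nat \<Rightarrow> (nat \<Rightarrow> nat \<Rightarrow> real) set" where
  "unit_ball n = {\<theta> \<in> mats n. frob n \<theta> \<le> 1}"

definition gauss_matrix :: "nat \<Rightarrow> (nat \<times> nat \<Rightarrow> real) measure" where
  "gauss_matrix n = PiM ({..<n} \<times> {..<n}) (\<lambda>_. density lborel std_normal_density)"

definition GW :: "nat \<Rightarrow> (nat \<Rightarrow> nat \<Rightarrow> real) set \<Rightarrow> real" where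
  "GW n A = (\<integral>Z. (SUP v\<in>A. \<Sum>i<n. \<Sum>j<n. Z (i, j) * v i j) \<partial>gauss_matrix n)"

text \<open>theta*: entry (i,j) (1-indexed) is 1 iff j > n/2. With 0-indexing, column j
  corresponds to j+1.\<close>
definition theta_star :: "nat \<Rightarrow> nat \<Rightarrow> nat \<Rightarrow> real" where
  "theta_star n i j = (if i < n \<and> j < n \<and> real (j + 1) > real n / 2 then 1 else 0)"

end

theory Submission
  imports Defs
begin

abbreviation NN :: "real measure" where "NN \<equiv> density lborel std_normal_density"
lemma pnd: "prob_space NN" using prob_space_normal_density[where \<sigma>=1 and \<mu>=0] by simp
lemma pps: "product_prob_space (\<lambda>_. NN)"
  unfolding product_prob_space_def product_prob_space_axioms_def product_sigma_finite_def
  using prob_space_normal_density[of 1 0] prob_space_imp_sigma_finite by auto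
lemma gm_eq: "gauss_matrix n = PiM ({..<n} \<times> {..<n}) (\<lambda>_. NN)"
  unfolding gauss_matrix_def by simp
lemma gm_prob: "prob_space (PiM I (\<lambda>_. NN))"
proof -
  interpret product_prob_space "\<lambda>_. NN" I using pps by (simp add: product_prob_space_def)
  show ?thesis by (rule P.prob_space_axioms)
qed
lemma sets_NN: "sets NN = sets borel" by simp

lemma indep_coords:
  assumes "finite I" "J \<subseteq> I" "J \<noteq> {}"
  shows "prob_space.indep_vars (PiM I (\<lambda>_. NN)) (\<lambda>_. borel) (\<lambda>j Z. Z j) J"
proof -
  interpret P: product_prob_space "\<lambda>_. NN" I using pps by (simp add: product_prob_space_def)
  have rv: "(\<lambda>Z. Z j) \<in> borel_measurable (PiM I (\<lambda>_. NN))" if "j \<in> J" for j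
    using that assms measurable_component_singleton[of j I "\<lambda>_. NN"]
    by (subst measurable_cong_sets[OF refl sets_NN[symmetric]]) auto
  have d1: "distr (PiM I (\<lambda>_. NN)) borel (\<lambda>Z. Z j) = NN" if "j \<in> J" for j
  proof -
    have "distr (PiM I (\<lambda>_. NN)) borel (\<lambda>Z. Z j) = distr (PiM I (\<lambda>_. NN)) NN (\<lambda>Z. Z j)"
      by (rule distr_cong) auto
    also have "\<dots> = NN" by (rule distr_PiM_component) (use that assms pnd in auto)
    finally show ?thesis .
  qed
  have "distr (PiM I (\<lambda>_. NN)) (PiM J (\<lambda>_. borel)) (\<lambda>Z. \<lambda>j\<in>J. Z j)
      = distr (PiM I (\<lambda>_. NN)) (PiM J (\<lambda>_. NN)) (\<lambda>Z. restrict Z J)"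
    by (rule distr_cong) (auto intro!: sets_PiM_cong)
  also have "\<dots> = PiM J (\<lambda>_. NN)"
    using assms by (intro P.distr_restrict[symmetric]) 
  also have "\<dots> = PiM J (\<lambda>j. distr (PiM I (\<lambda>_. NN)) borel (\<lambda>Z. Z j))"
    by (intro PiM_cong) (auto simp: d1)
  finally have eq: "distr (PiM I (\<lambda>_. NN)) (PiM J (\<lambda>_. borel)) (\<lambda>Z. \<lambda>j\<in>J. Z j) = PiM J (\<lambda>j. distr (PiM I (\<lambda>_. NN)) borel (\<lambda>Z. Z j))" .
  have iff: "P.indep_vars (\<lambda>_. borel) (\<lambda>j Z. Z j) J \<longleftrightarrow> distr (PiM I (\<lambda>_. NN)) (PiM J (\<lambda>_. borel)) (\<lambda>Z. \<lambda>j\<in>J. Z j) = PiM J (\<lambda>j. distr (PiM I (\<lambda>_. NN)) borel (\<lambda>Z. Z j))"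
    by (rule P.indep_vars_iff_distr_eq_PiM'[OF assms(3) rv])
  show ?thesis using iff eq by (rule iffD2)
qed

lemma coord_distr:
  assumes "finite I" "j \<in> I"
  shows "distributed (PiM I (\<lambda>_. NN)) lborel (\<lambda>Z. Z j) std_normal_density"
proof -
  have "distr (PiM I (\<lambda>_. NN)) lborel (\<lambda>Z. Z j) = distr (PiM I (\<lambda>_. NN)) NN (\<lambda>Z. Z j)"
    by (rule distr_cong) simp_all
  also have "\<dots> = NN" by (rule distr_PiM_component) (use assms pnd in auto)
  finally have c: "distr (PiM I (\<lambda>_. NN)) lborel (\<lambda>Z. Z j) = NN" .
  have m: "(\<lambda>Z. Z j) \<in> measurable (PiM I (\<lambda>_. NN)) lborel"
  proof -
    have "measurable (PiM I (\<lambda>_. NN)) lborel = measurable (PiM I (\<lambda>_. NN)) NN"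
      by (rule measurable_cong_sets[OF refl]) simp
    moreover have "(\<lambda>Z. Z j) \<in> measurable (PiM I (\<lambda>_. NN)) NN"
      by (rule measurable_component_singleton[OF assms(2)])
    ultimately show ?thesis by (simp only:)
  qed
  show ?thesis unfolding distributed_def
  proof (intro conjI)
    show "distr (PiM I (\<lambda>_. NN)) lborel (\<lambda>Z. Z j) = density lborel (\<lambda>x. ennreal (std_normal_density x))"
      by (fact c)
    show "(\<lambda>x. ennreal (std_normal_density x)) \<in> borel_measurable lborel" by measurable
  qed (fact m)
qed

lemma nd_max_int:
  assumes "\<sigma> > 0"
  shows "integrable lborel (\<lambda>x. normal_density 0 \<sigma> x * max x 0)"
    "(\<integral>x. normal_density 0 \<sigma> x * max x 0 \<partial>lborel) = \<sigma> * sqrt (2/pi) / 2"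
proof -
  have e: "(\<lambda>x. normal_density 0 \<sigma> x * max x 0) = (\<lambda>x. (normal_density 0 \<sigma> x * x + normal_density 0 \<sigma> x * \<bar>x - 0\<bar>^(2*0+1)) / 2)"
  proof
    fix x :: real show "normal_density 0 \<sigma> x * max x 0 = (normal_density 0 \<sigma> x * x + normal_density 0 \<sigma> x * \<bar>x - 0\<bar>^(2*0+1)) / 2"
      by (cases "x \<ge> 0") (simp_all add: algebra_simps)
  qed
  have h1: "has_bochner_integral lborel (\<lambda>x. normal_density 0 \<sigma> x * x) 0"
    using normal_moment_nz_1[of \<sigma> 0] assms by simp
  have h2: "has_bochner_integral lborel (\<lambda>x. normal_density 0 \<sigma> x * \<bar>x - 0\<bar>^(2*0+1)) (2^0 * \<sigma>^(2*0+1) * fact 0 * sqrt (2/pi))"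
    using assms by (rule normal_moment_abs_odd)
  have "has_bochner_integral lborel (\<lambda>x. (normal_density 0 \<sigma> x * x + normal_density 0 \<sigma> x * \<bar>x - 0\<bar>^(2*0+1)) / 2) ((0 + 2^0 * \<sigma>^(2*0+1) * fact 0 * sqrt (2/pi)) / 2)"
    by (intro has_bochner_integral_divide_zero has_bochner_integral_add h1 h2)
  then have h: "has_bochner_integral lborel (\<lambda>x. normal_density 0 \<sigma> x * max x 0) (\<sigma> * sqrt (2/pi) / 2)"
    unfolding e by simp
  show "integrable lborel (\<lambda>x. normal_density 0 \<sigma> x * max x 0)"
    using h by (simp add: has_bochner_integral_iff)
  show "(\<integral>x. normal_density 0 \<sigma> x * max x 0 \<partial>lborel) = \<sigma> * sqrt (2/pi) / 2"
    using h by (rule has_bochner_integral_integral_eq)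
qed



lemma block_gain:
  assumes "finite I" "J \<subseteq> I" "J \<noteq> {}"
  shows "integrable (PiM I (\<lambda>_. NN)) (\<lambda>Z. max (\<Sum>j\<in>J. Z j) 0)"
    "(\<integral>Z. max (\<Sum>j\<in>J. Z j) 0 \<partial>PiM I (\<lambda>_. NN)) = sqrt (real (card J)) * sqrt (2/pi) / 2"
proof -
  interpret prob_space "PiM I (\<lambda>_. NN)" by (rule gm_prob)
  have fJ: "finite J" using assms finite_subset by blast
  have d: "distributed (PiM I (\<lambda>_. NN)) lborel (\<lambda>Z. \<Sum>j\<in>J. Z j) (normal_density (\<Sum>j\<in>J. 0) (sqrt (\<Sum>j\<in>J. 1\<^sup>2)))"
    using assms fJ
    by (intro sum_indep_normal[where X="\<lambda>j Z. Z j" and \<sigma>="\<lambda>_. 1" and \<mu>="\<lambda>_. 0"] indep_coords coord_distr) auto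
  then have d: "distributed (PiM I (\<lambda>_. NN)) lborel (\<lambda>Z. \<Sum>j\<in>J. Z j) (normal_density 0 (sqrt (card J)))"
    by simp
  have sp: "sqrt (real (card J)) > 0" using fJ assms by (simp add: card_gt_0_iff)
  show "integrable (PiM I (\<lambda>_. NN)) (\<lambda>Z. max (\<Sum>j\<in>J. Z j) 0)"
    using distributed_integrable[OF d, of "\<lambda>x. max x 0"] nd_max_int(1)[OF sp] normal_density_nonneg by auto
  show "(\<integral>Z. max (\<Sum>j\<in>J. Z j) 0 \<partial>PiM I (\<lambda>_. NN)) = sqrt (real (card J)) * sqrt (2/pi) / 2"
    using distributed_integral[OF d, of "\<lambda>x. max x 0"] nd_max_int(2)[OF sp] normal_density_nonneg by auto
qed

lemma coord_int:
  assumes "finite I" "j \<in> I"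
  shows "integrable (PiM I (\<lambda>_. NN)) (\<lambda>Z. Z j)" "(\<integral>Z. Z j \<partial>PiM I (\<lambda>_. NN)) = 0"
    "integrable (PiM I (\<lambda>_. NN)) (\<lambda>Z. \<bar>Z j\<bar>)"
proof -
  have d: "distributed (PiM I (\<lambda>_. NN)) lborel (\<lambda>Z. Z j) (normal_density 0 1)"
    using coord_distr[OF assms] by simp
  have nn: "\<And>x. 0 \<le> normal_density 0 1 x" by (rule normal_density_nonneg)
  have e1: "integrable lborel (\<lambda>x. normal_density 0 1 x * x) \<longleftrightarrow> integrable (PiM I (\<lambda>_. NN)) (\<lambda>Z. Z j)"
    by (rule distributed_integrable[OF d]) (simp_all add: nn)
  have e2: "integrable lborel (\<lambda>x. normal_density 0 1 x * \<bar>x\<bar>) \<longleftrightarrow> integrable (PiM I (\<lambda>_. NN)) (\<lambda>Z. \<bar>Z j\<bar>)"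
    by (rule distributed_integrable[OF d]) (simp_all add: nn)
  have e3: "(\<integral>x. normal_density 0 1 x * x \<partial>lborel) = (\<integral>Z. Z j \<partial>PiM I (\<lambda>_. NN))"
    by (rule distributed_integral[OF d]) (simp_all add: nn)
  have a1: "integrable lborel (\<lambda>x. normal_density 0 1 x * x)"
    by (rule integrable_normal_moment_nz_1) simp
  have a2: "integrable lborel (\<lambda>x. normal_density 0 1 x * \<bar>x - 0\<bar>^1)"
    by (rule integrable_normal_moment_abs) simp
  have a3: "(\<integral>x. normal_density 0 1 x * x \<partial>lborel) = 0"
    by (rule integral_normal_moment_nz_1) simp
  show "integrable (PiM I (\<lambda>_. NN)) (\<lambda>Z. Z j)" using e1 a1 by simp
  show "(\<integral>Z. Z j \<partial>PiM I (\<lambda>_. NN)) = 0" using e3 a3 by simp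
  show "integrable (PiM I (\<lambda>_. NN)) (\<lambda>Z. \<bar>Z j\<bar>)" using e2 a2 by simp
qed


definition LL :: "nat \<Rightarrow> (nat \<times> nat \<Rightarrow> real) \<Rightarrow> (nat \<Rightarrow> nat \<Rightarrow> real) \<Rightarrow> real" where
  "LL n W u = (\<Sum>i<n. \<Sum>j<n. W (i, j) * u i j)"

definition AW :: "nat \<Rightarrow> (nat \<times> nat \<Rightarrow> real) \<Rightarrow> real" where
  "AW n W = (\<Sum>i<n. \<Sum>j<n. \<bar>W (i, j)\<bar>)"

lemma ub_entry:
  assumes "u \<in> unit_ball n"
  shows "\<bar>u i j\<bar> \<le> 1"
proof (cases "i < n \<and> j < n")
  case True
  have "(u i j)\<^sup>2 \<le> (\<Sum>j'<n. (u i j')\<^sup>2)"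
    using True by (intro member_le_sum) auto
  also have "\<dots> \<le> (\<Sum>i'<n. \<Sum>j'<n. (u i' j')\<^sup>2)"
    using True by (intro member_le_sum[where f="\<lambda>i'. \<Sum>j'<n. (u i' j')\<^sup>2"]) (auto intro: sum_nonneg)
  also have "\<dots> \<le> 1"
  proof -
    have "sqrt (\<Sum>i'<n. \<Sum>j'<n. (u i' j')\<^sup>2) \<le> 1" using assms by (simp add: unit_ball_def frob_def)
    then show ?thesis by (simp add: real_sqrt_le_1_iff)
  qed
  finally show ?thesis by (simp add: abs_square_le_1)
next
  case False
  then have "u i j = 0" using assms by (auto simp: unit_ball_def mats_def)
  then show ?thesis by simp
qed

lemma LL_le:
  assumes "u \<in> unit_ball n"
  shows "LL n W u \<le> AW n W" "- AW n W \<le> LL n W u"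
proof -
  have "\<bar>LL n W u\<bar> \<le> AW n W"
    unfolding LL_def AW_def
    apply (rule order_trans[OF sum_abs]) apply (rule sum_mono)
    apply (rule order_trans[OF sum_abs]) apply (rule sum_mono)
    using ub_entry[OF assms] by (simp add: abs_mult mult_left_le)
  then show "LL n W u \<le> AW n W" "- AW n W \<le> LL n W u" by auto
qed

lemma LL_diff: "LL n W u = LL n W' u + LL n (\<lambda>x. W x - W' x) u"
  unfolding LL_def by (simp add: algebra_simps sum.distrib[symmetric])

lemma AW_cont: "continuous_on UNIV (\<lambda>W. AW n (\<lambda>x. W x - W0 x))"
  unfolding AW_def by (intro continuous_intros) auto

lemma sup_lip:
  assumes "A \<subseteq> unit_ball n" "A \<noteq> {}"
  shows "(SUP u\<in>A. LL n W u) \<le> (SUP u\<in>A. LL n W' u) + AW n (\<lambda>x. W x - W' x)"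
proof (rule cSUP_least[OF assms(2)])
  fix u assume u: "u \<in> A"
  have b: "bdd_above ((\<lambda>u. LL n W' u) ` A)"
    using LL_le(1) assms(1) by (intro bdd_aboveI2[where M="AW n W'"]) blast
  have "LL n W u = LL n W' u + LL n (\<lambda>x. W x - W' x) u" by (rule LL_diff)
  also have "\<dots> \<le> (SUP u\<in>A. LL n W' u) + AW n (\<lambda>x. W x - W' x)"
    using u assms(1) LL_le(1)[of u n] by (intro add_mono cSUP_upper[OF u b]) auto
  finally show "LL n W u \<le> (SUP u\<in>A. LL n W' u) + AW n (\<lambda>x. W x - W' x)" .
qed

lemma AW_sym: "AW n (\<lambda>x. W x - W' x) = AW n (\<lambda>x. W' x - W x)"
  unfolding AW_def by (simp add: abs_minus_commute)

lemma sup_cont: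
  assumes "A \<subseteq> unit_ball n" "A \<noteq> {}"
  shows "continuous_on UNIV (\<lambda>W. SUP u\<in>A. LL n W u)"
proof -
  let ?F = "\<lambda>W. SUP u\<in>A. LL n W u"
  have "isCont ?F W0" for W0
  proof -
    have c: "isCont (\<lambda>W. AW n (\<lambda>x. W x - W0 x)) W0"
      using AW_cont[of n W0] continuous_on_eq_continuous_at[of UNIV] by auto
    have "((\<lambda>W. AW n (\<lambda>x. W x - W0 x)) \<longlongrightarrow> AW n (\<lambda>x. W0 x - W0 x)) (at W0)"
      using c by (simp add: isCont_def)
    then have t: "((\<lambda>W. AW n (\<lambda>x. W x - W0 x)) \<longlongrightarrow> 0) (at W0)" by (simp add: AW_def)
    have "((\<lambda>W. ?F W - ?F W0) \<longlongrightarrow> 0) (at W0)"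
    proof (rule Lim_null_comparison[OF _ t], rule always_eventually, rule allI)
      fix W
      show "norm (?F W - ?F W0) \<le> AW n (\<lambda>x. W x - W0 x)"
        using sup_lip[OF assms, of W W0] sup_lip[OF assms, of W0 W] AW_sym[of n W W0] by auto
    qed
    then show ?thesis unfolding isCont_def by (simp add: LIM_zero_iff)
  qed
  then show ?thesis by (simp add: continuous_at_imp_continuous_on)
qed

lemma sup_bound:
  assumes "A \<subseteq> unit_ball n" "A \<noteq> {}"
  shows "\<bar>SUP u\<in>A. LL n W u\<bar> \<le> AW n W"
proof -
  obtain u0 where u0: "u0 \<in> A" using assms by auto
  have b: "bdd_above ((\<lambda>u. LL n W u) ` A)"
    using LL_le(1) assms(1) by (intro bdd_aboveI2[where M="AW n W"]) blast
  have "(SUP u\<in>A. LL n W u) \<le> AW n W"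
    using LL_le(1) assms by (intro cSUP_least) auto
  moreover have "- AW n W \<le> (SUP u\<in>A. LL n W u)"
    using LL_le(2)[of u0 n W] u0 assms cSUP_upper[OF u0 b] by auto
  ultimately show ?thesis by auto
qed

lemma gw_lower:
  assumes AU: "A \<subseteq> unit_ball n"
    and vA: "\<And>Z. Z \<in> space (gauss_matrix n) \<Longrightarrow> v Z \<in> A"
    and gi: "integrable (gauss_matrix n) g"
    and geq: "\<And>Z. Z \<in> space (gauss_matrix n) \<Longrightarrow> g Z = LL n Z (v Z)"
  shows "integral\<^sup>L (gauss_matrix n) g \<le> GW n A"
proof -
  let ?M = "gauss_matrix n"
  let ?I = "{..<n} \<times> {..<n}"
  let ?F = "\<lambda>W. SUP u\<in>A. LL n W u"
  have M: "?M = PiM ?I (\<lambda>_. NN)" by (rule gm_eq)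
  have ne: "A \<noteq> {}"
  proof -
    have "space (PiM ?I (\<lambda>_. NN)) \<noteq> {}" by (rule prob_space.not_empty[OF gm_prob])
    then obtain Z where "Z \<in> space (PiM ?I (\<lambda>_. NN))" by blast
    then have "Z \<in> space ?M" using M by simp
    then show ?thesis using vA by auto
  qed
  have GWe: "GW n A = integral\<^sup>L ?M ?F" unfolding GW_def LL_def by simp
  have mid: "(\<lambda>Z. Z) \<in> borel_measurable ?M"
  proof (rule measurable_coordinatewise_then_product)
    fix x :: "nat \<times> nat"
    obtain x1 x2 where xx: "x = (x1, x2)" by (cases x)
    show "(\<lambda>Z. Z x) \<in> borel_measurable ?M"
    proof (cases "x \<in> ?I")
      case True
      then show ?thesis unfolding M
        using measurable_component_singleton[of x ?I "\<lambda>_. NN"]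
        by (subst measurable_cong_sets[OF refl sets_NN[symmetric]]) auto
    next
      case False
      have "(\<lambda>Z. Z x) \<in> borel_measurable ?M \<longleftrightarrow> (\<lambda>Z. undefined::real) \<in> borel_measurable ?M"
        by (rule Sigma_Algebra.measurable_cong[where g="\<lambda>Z. undefined::real"]) (use False in \<open>auto simp: M space_PiM PiE_def extensional_def xx\<close>)
      then show ?thesis by simp
    qed
  qed
  have Fm: "?F \<in> borel_measurable ?M"
    using measurable_compose[OF mid borel_measurable_continuous_onI[OF sup_cont[OF AU ne]]] by simp
  have AWi: "integrable ?M (AW n)"
    unfolding AW_def M
    by (intro Bochner_Integration.integrable_sum coord_int(3)) auto
  have Fi: "integrable ?M ?F"
  proof (rule Bochner_Integration.integrable_bound[OF AWi Fm], rule AE_I2)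
    fix Z show "norm (?F Z) \<le> norm (AW n Z)"
      using sup_bound[OF AU ne, of Z] by (simp add: AW_def)
  qed
  have "integral\<^sup>L ?M g \<le> integral\<^sup>L ?M ?F"
  proof (rule integral_mono[OF gi Fi])
    fix Z assume Z: "Z \<in> space ?M"
    have b: "bdd_above ((\<lambda>u. LL n Z u) ` A)"
      using LL_le(1) AU by (intro bdd_aboveI2[where M="AW n Z"]) blast
    show "g Z \<le> ?F Z" using geq[OF Z] cSUP_upper[OF vA[OF Z] b] by simp
  qed
  then show ?thesis using GWe by simp
qed


lemma ts_eq:
  assumes "i < n" "j < n"
  shows "theta_star n i j = (if n div 2 \<le> j then 1 else 0)"
proof -
  have "(real (j + 1) > real n / 2) \<longleftrightarrow> n div 2 \<le> j" by linarith
  then show ?thesis using assms unfolding theta_star_def by auto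
qed

lemma TV_formula:
  fixes c :: real and d :: "nat \<Rightarrow> real"
  assumes n2: "n \<ge> 2" and c: "c \<ge> 0" and d: "\<And>i. d i \<ge> 0" and cd: "\<And>i. c + d i \<le> 1"
  defines "m \<equiv> n div 2"
  defines "Q \<equiv> (\<lambda>i j. if i < n \<and> j < n then (if j < m then c else 0) + (if j = m - 1 then d i else 0) else 0)"
  shows "TV n (\<lambda>i j. theta_star n i j + Q i j)
     = (\<Sum>i<n. 1 - c - d i + (if m \<ge> 2 then d i else 0)) + (\<Sum>i<n - 1. \<bar>d (i+1) - d i\<bar>)"
proof -
  let ?T = "\<lambda>i j. theta_star n i j + Q i j"
  have m1: "m \<ge> 1" "m < n" using n2 unfolding m_def by auto
  have T: "?T i j = (if m \<le> j then 1 else 0) + (if j < m then c else 0) + (if j = m - 1 then d i else 0)"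
    if "i < n" "j < n" for i j
    using that ts_eq[OF that] unfolding Q_def m_def by simp
  have H: "(\<Sum>j<n - 1. \<bar>?T i (j+1) - ?T i j\<bar>) = 1 - c - d i + (if m \<ge> 2 then d i else 0)"
    if i: "i < n" for i
  proof -
    have "(\<Sum>j<n - 1. \<bar>?T i (j+1) - ?T i j\<bar>)
        = (\<Sum>j<n - 1. (if j = m - 1 then 1 - c - d i else 0) + (if m \<ge> 2 \<and> j = m - 2 then d i else 0))"
    proof (rule sum.cong[OF refl])
      fix j assume "j \<in> {..<n - 1}"
      then have j: "j < n" "j + 1 < n" by auto
      show "\<bar>?T i (j+1) - ?T i j\<bar> = (if j = m - 1 then 1 - c - d i else 0) + (if m \<ge> 2 \<and> j = m - 2 then d i else 0)"
        unfolding T[OF i j(1)] T[OF i j(2)] using m1 c d[of i] cd[of i] by auto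
    qed
    also have "\<dots> = (1 - c - d i) + (if m \<ge> 2 then d i else 0)"
      using m1 by (simp add: sum.distrib sum.delta, arith)
    finally show ?thesis .
  qed
  have V: "(\<Sum>j<n. \<bar>?T (i+1) j - ?T i j\<bar>) = \<bar>d (i+1) - d i\<bar>" if i: "i < n - 1" for i
  proof -
    have i': "i < n" "i + 1 < n" using i by auto
    have "(\<Sum>j<n. \<bar>?T (i+1) j - ?T i j\<bar>) = (\<Sum>j<n. if j = m - 1 then \<bar>d (i+1) - d i\<bar> else 0)"
    proof (rule sum.cong[OF refl])
      fix j assume "j \<in> {..<n}"
      then have j: "j < n" by auto
      show "\<bar>?T (i+1) j - ?T i j\<bar> = (if j = m - 1 then \<bar>d (i+1) - d i\<bar> else 0)"
        unfolding T[OF i'(1) j] T[OF i'(2) j] by auto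
    qed
    also have "\<dots> = \<bar>d (i+1) - d i\<bar>" using m1 by (simp add: sum.delta, arith)
    finally show ?thesis .
  qed
  show ?thesis unfolding TV_def using H V by simp
qed


definition blkS :: "nat \<Rightarrow> nat \<Rightarrow> nat \<Rightarrow> (nat \<times> nat \<Rightarrow> real) \<Rightarrow> real" where
  "blkS n r k Z = (\<Sum>i\<in>{k*r..<k*r+r}. Z (i, n div 2 - 1))"

definition ee :: "nat \<Rightarrow> nat \<Rightarrow> (nat \<times> nat \<Rightarrow> real) \<Rightarrow> nat \<Rightarrow> real" where
  "ee n r Z i = (if i < (n div r) * r \<and> blkS n r (i div r) Z > 0 then 1 else 0)"

lemma ee_change:
  assumes r: "r \<ge> 1"
  shows "(\<Sum>i<n - 1. \<bar>ee n r Z (i+1) - ee n r Z i\<bar>) \<le> real (n div r)"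
proof -
  define b where "b = n div r"
  define X where "X = (\<lambda>k. k*r + (r-1)) ` {..<b}"
  have key: "ee n r Z (i+1) = ee n r Z i" if nx: "i \<notin> X" for i
  proof (cases "i + 1 < b * r")
    case True
    have "(i+1) div r = i div r"
    proof (rule ccontr)
      assume ne: "(i+1) div r \<noteq> i div r"
      then have "Suc i mod r = 0" using div_Suc[of i r] by (auto split: if_splits)
      then have im: "i mod r = r - 1" using mod_Suc[of i r] r by (auto split: if_splits)
      have ieq: "i = (i div r) * r + (r - 1)" using im div_mult_mod_eq[of i r] by simp
      have "(i div r) * r + r < b * r + 1" using True ieq r by linarith
      then have "(i div r) * r + r \<le> b * r" by linarith
      then have "(i div r + 1) * r \<le> b * r" by (simp add: algebra_simps)
      then have "i div r + 1 \<le> b" using r mult_le_cancel2[of "i div r + 1" r b] by simp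
      then have "i \<in> X" unfolding X_def using ieq by (intro image_eqI[of _ _ "i div r"]) auto
      then show False using nx by simp
    qed
    then show ?thesis unfolding ee_def b_def[symmetric] using True by auto
  next
    case False
    show ?thesis
    proof (cases "i + 1 = b * r")
      case True
      then have "b \<ge> 1" using r by (cases b) auto
      then have "i = (b - 1) * r + (r - 1)" using True r
        by (simp add: algebra_simps diff_mult_distrib)
      then have "i \<in> X" unfolding X_def using \<open>b \<ge> 1\<close> by (intro image_eqI[of _ _ "b - 1"]) auto
      then show ?thesis using nx by simp
    next
      case F2: False
      then have "\<not> i < b * r" using False by simp
      then show ?thesis unfolding ee_def b_def[symmetric] using False by auto
    qed
  qed
  have le: "\<bar>ee n r Z (i+1) - ee n r Z i\<bar> \<le> (if i \<in> X then 1 else 0)" for i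
  proof (cases "i \<in> X")
    case True
    then show ?thesis unfolding ee_def by auto
  next
    case False
    then show ?thesis using key[OF False] by simp
  qed
  have "(\<Sum>i<n - 1. \<bar>ee n r Z (i+1) - ee n r Z i\<bar>) \<le> (\<Sum>i<n - 1. (if i \<in> X then 1 else 0 :: real))"
    by (intro sum_mono le)
  also have "\<dots> = real (card ({..<n - 1} \<inter> X))"
    by (simp add: sum.If_cases)
  also have "\<dots> \<le> real (card X)"
    unfolding X_def by (intro of_nat_mono card_mono) auto
  also have "\<dots> \<le> real b"
    unfolding X_def by (intro of_nat_mono order_trans[OF card_image_le]) auto
  finally show ?thesis unfolding b_def .
qed


definition vv :: "nat \<Rightarrow> nat \<Rightarrow> (nat \<times> nat \<Rightarrow> real) \<Rightarrow> nat \<Rightarrow> nat \<Rightarrow> real" where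
  "vv n r Z i j = (if i < n \<and> j < n then
      (if j < n div 2 then real (n div r) / real n else 0) + (if j = n div 2 - 1 then ee n r Z i else 0)
     else 0) / (3 * sqrt (real n))"

definition gg :: "nat \<Rightarrow> nat \<Rightarrow> (nat \<times> nat \<Rightarrow> real) \<Rightarrow> real" where
  "gg n r Z = (real (n div r) / real n * (\<Sum>i<n. \<Sum>j<n div 2. Z (i, j))
      + (\<Sum>k<n div r. max (blkS n r k Z) 0)) / (3 * sqrt (real n))"

lemma sum_if_lt:
  fixes f :: "nat \<Rightarrow> real"
  assumes "m \<le> n"
  shows "(\<Sum>j<n. if j < m then f j else 0) = (\<Sum>j<m. f j)"
  by (rule sum.mono_neutral_cong_right) (use assms in auto)

lemma LL_vv:
  assumes n: "n \<ge> 1" and r: "r \<ge> 1"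
  shows "(\<Sum>i<n. \<Sum>j<n. Z (i, j) * vv n r Z i j) = gg n r Z"
proof -
  let ?m = "n div 2" let ?c = "n div 2 - 1" let ?a = "real (n div r) / real n"
  let ?b = "n div r"
  have c0: "?c < n" using n by auto
  have br: "?b * r \<le> n" by (metis div_mult_mod_eq le_add1)
  have row: "(\<Sum>j<n. Z (i, j) * vv n r Z i j) = (?a * (\<Sum>j<?m. Z (i, j)) + Z (i, ?c) * ee n r Z i) / (3 * sqrt (real n))"
    if i: "i < n" for i
  proof -
    have "(\<Sum>j<n. Z (i, j) * vv n r Z i j) = (\<Sum>j<n. (if j < ?m then ?a * Z (i, j) else 0) + (if j = ?c then Z (i, ?c) * ee n r Z i else 0)) / (3 * sqrt (real n))"
      unfolding sum_divide_distrib
      by (rule sum.cong[OF refl]) (use i in \<open>auto simp: vv_def field_simps\<close>)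
    also have "\<dots> = (?a * (\<Sum>j<?m. Z (i, j)) + Z (i, ?c) * ee n r Z i) / (3 * sqrt (real n))"
      using c0 by (simp add: sum.distrib sum_if_lt sum_distrib_left)
    finally show ?thesis .
  qed
  have "(\<Sum>i<n. Z (i, ?c) * ee n r Z i) = (\<Sum>i<?b * r. Z (i, ?c) * ee n r Z i)"
    by (rule sum.mono_neutral_cong_right) (use br in \<open>auto simp: ee_def\<close>)
  also have "\<dots> = (\<Sum>k<?b. \<Sum>i\<in>{k*r..<k*r+r}. Z (i, ?c) * ee n r Z i)"
    by (rule sum.nat_group[symmetric])
  also have "\<dots> = (\<Sum>k<?b. max (blkS n r k Z) 0)"
  proof (rule sum.cong[OF refl])
    fix k assume k: "k \<in> {..<?b}"
    have e: "ee n r Z i = (if blkS n r k Z > 0 then 1 else 0)" if "i \<in> {k*r..<k*r+r}" for i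
    proof -
      have "i div r = k" using that by (intro div_nat_eqI) (auto simp: algebra_simps)
      moreover have "i < ?b * r"
      proof -
        have "k + 1 \<le> ?b" using k by simp
        then have "(k+1) * r \<le> ?b * r" by (rule mult_right_mono) simp
        then show ?thesis using that by (simp add: algebra_simps)
      qed
      ultimately show ?thesis unfolding ee_def by simp
    qed
    have "(\<Sum>i\<in>{k*r..<k*r+r}. Z (i, ?c) * ee n r Z i) = (\<Sum>i\<in>{k*r..<k*r+r}. Z (i, ?c) * (if blkS n r k Z > 0 then 1 else 0))"
      by (rule sum.cong[OF refl]) (simp add: e)
    also have "\<dots> = max (blkS n r k Z) 0"
      unfolding blkS_def by (auto simp: sum_distrib_right[symmetric] max_def)
    finally show "(\<Sum>i\<in>{k*r..<k*r+r}. Z (i, ?c) * ee n r Z i) = max (blkS n r k Z) 0" .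
  qed
  finally have col: "(\<Sum>i<n. Z (i, ?c) * ee n r Z i) = (\<Sum>k<?b. max (blkS n r k Z) 0)" .
  have "(\<Sum>i<n. \<Sum>j<n. Z (i, j) * vv n r Z i j) = (\<Sum>i<n. (?a * (\<Sum>j<?m. Z (i, j)) + Z (i, ?c) * ee n r Z i) / (3 * sqrt (real n)))"
    by (rule sum.cong[OF refl]) (simp add: row)
  also have "\<dots> = gg n r Z"
    unfolding gg_def sum_divide_distrib[symmetric] sum.distrib col sum_distrib_left ..
  finally show ?thesis .
qed


lemma vv_mats: "vv n r Z \<in> mats n"
  unfolding mats_def vv_def by auto

lemma ts_mats: "theta_star n \<in> mats n"
  unfolding mats_def theta_star_def by auto

lemma ee_01: "0 \<le> ee n r Z i" "ee n r Z i \<le> 1"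
  unfolding ee_def by auto

lemma br_le: "(n div r) * r \<le> (n::nat)" by (metis div_mult_mod_eq le_add1)

lemma vv_K:
  assumes n: "n \<ge> 1" and r: "r \<ge> 1"
  shows "(\<lambda>i j. theta_star n i j + vv n r Z i j) \<in> K n (TV n (theta_star n))"
proof -
  have mats: "(\<lambda>i j. theta_star n i j + vv n r Z i j) \<in> mats n"
    using vv_mats[of n r Z] ts_mats[of n] unfolding mats_def by auto
  have "TV n (\<lambda>i j. theta_star n i j + vv n r Z i j) \<le> TV n (theta_star n)"
  proof (cases "n = 1")
    case True
    then show ?thesis by (simp add: TV_def)
  next
    case False
    then have n2: "n \<ge> 2" using n by simp
    define D where "D = 3 * sqrt (real n)"
    define a where "a = real (n div r) / real n"
    define c where "c = a / D"
    define d where "d = (\<lambda>i. ee n r Z i / D)"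
    let ?m = "n div 2"
    have D3: "D \<ge> 3" unfolding D_def using n by simp
    have a01: "0 \<le> a" "a \<le> 1" unfolding a_def using br_le[of n r] r n
      by (auto simp: field_simps)
    have c0: "c \<ge> 0" unfolding c_def using a01 D3 by simp
    have d0: "\<And>i. d i \<ge> 0" unfolding d_def using ee_01 D3 by simp
    have cd: "\<And>i. c + d i \<le> 1"
    proof -
      fix i
      have "c + d i = (a + ee n r Z i) / D" unfolding c_def d_def by (simp add: add_divide_distrib)
      also have "\<dots> \<le> 2 / D" using a01 ee_01[of n r Z i] D3 by (intro divide_right_mono) auto
      also have "\<dots> \<le> 1" using D3 by simp
      finally show "c + d i \<le> 1" .
    qed
    have vvQ: "vv n r Z = (\<lambda>i j. if i < n \<and> j < n then (if j < ?m then c else 0) + (if j = ?m - 1 then d i else 0) else 0)"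
      unfolding vv_def c_def d_def a_def D_def by (auto simp: fun_eq_iff add_divide_distrib)
    have ts0: "theta_star n = (\<lambda>i j. theta_star n i j + (if i < n \<and> j < n then (if j < ?m then 0 else 0) + (if j = ?m - 1 then (\<lambda>_. 0::real) i else 0) else 0))"
      by (simp add: fun_eq_iff)
    have TV0: "TV n (theta_star n) = (\<Sum>i<n. 1 - 0 - (\<lambda>_. 0::real) i + (if ?m \<ge> 2 then (\<lambda>_. 0::real) i else 0)) + (\<Sum>i<n - 1. \<bar>(\<lambda>_. 0::real) (i+1) - (\<lambda>_. 0::real) i\<bar>)"
      by (subst ts0, rule TV_formula[OF n2]) auto
    then have TV0': "TV n (theta_star n) = real n" by simp
    have TV1: "TV n (\<lambda>i j. theta_star n i j + vv n r Z i j) = (\<Sum>i<n. 1 - c - d i + (if ?m \<ge> 2 then d i else 0)) + (\<Sum>i<n - 1. \<bar>d (i+1) - d i\<bar>)"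
      unfolding vvQ by (rule TV_formula[OF n2 c0 d0 cd])
    have s1: "(\<Sum>i<n. 1 - c - d i + (if ?m \<ge> 2 then d i else 0)) \<le> (\<Sum>i<n. 1 - c)"
      using d0 by (intro sum_mono) auto
    have s2: "(\<Sum>i<n - 1. \<bar>d (i+1) - d i\<bar>) \<le> real (n div r) / D"
    proof -
      have "(\<Sum>i<n - 1. \<bar>d (i+1) - d i\<bar>) = (\<Sum>i<n - 1. \<bar>ee n r Z (i+1) - ee n r Z i\<bar>) / D"
        unfolding d_def sum_divide_distrib using D3 by (intro sum.cong) (auto simp: diff_divide_distrib[symmetric])
      also have "\<dots> \<le> real (n div r) / D"
        using ee_change[OF r, of n Z] D3 by (intro divide_right_mono) auto
      finally show ?thesis .
    qed
    have "real n * c = real (n div r) / D" unfolding c_def a_def using n by simp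
    then show ?thesis unfolding TV1 TV0' using s1 s2 by (simp add: algebra_simps)
  qed
  then show ?thesis using mats unfolding K_def by simp
qed

lemma vv_tangent:
  assumes n: "n \<ge> 1" and r: "r \<ge> 1"
  shows "vv n r Z \<in> tangent_cone n (TV n (theta_star n)) (theta_star n)"
proof -
  let ?S = "{\<theta> \<in> mats n. (\<lambda>i j. theta_star n i j + \<theta> i j) \<in> K n (TV n (theta_star n))}"
  have inS: "vv n r Z \<in> ?S" using vv_mats vv_K[OF n r] by simp
  have inC: "vv n r Z \<in> cone_gen ?S"
    unfolding cone_gen_def
    by (rule CollectI, rule exI[of _ 1], rule exI[of _ "vv n r Z"]) (use inS in auto)
  show ?thesis unfolding tangent_cone_def mclosure_def
  proof (intro CollectI conjI allI impI)
    show "vv n r Z \<in> mats n" by (rule vv_mats)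
    fix \<epsilon> :: real assume "\<epsilon> > 0"
    then show "\<exists>\<phi>\<in>cone_gen ?S. frob n (\<lambda>i j. vv n r Z i j - \<phi> i j) < \<epsilon>"
      using inC by (intro bexI[of _ "vv n r Z"]) (auto simp: frob_def)
  qed
qed


lemma blkS_eq:
  "blkS n r k Z = (\<Sum>x\<in>(\<lambda>i. (i, n div 2 - 1)) ` {k*r..<k*r+r}. Z x)"
  unfolding blkS_def by (subst sum.reindex) (auto simp: inj_on_def)

lemma gg_int:
  assumes n: "n \<ge> 1" and r: "r \<ge> 1"
  shows "integrable (gauss_matrix n) (gg n r)"
    "integral\<^sup>L (gauss_matrix n) (gg n r) = real (n div r) * (sqrt (real r) * sqrt (2/pi) / 2) / (3 * sqrt (real n))"
proof -
  let ?I = "{..<n} \<times> {..<n}"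
  let ?M = "PiM ?I (\<lambda>_. NN)"
  let ?b = "n div r"
  let ?a = "real (n div r) / real n"
  have fI: "finite ?I" by simp
  have J: "(\<lambda>i. (i, n div 2 - 1)) ` {k*r..<k*r+r} \<subseteq> ?I" "(\<lambda>i. (i, n div 2 - 1)) ` {k*r..<k*r+r} \<noteq> {}"
    "card ((\<lambda>i. (i, n div 2 - 1)) ` {k*r..<k*r+r}) = r"
    if k: "k < ?b" for k
  proof -
    have "k + 1 \<le> ?b" using k by simp
    then have "(k+1) * r \<le> ?b * r" by (rule mult_right_mono) simp
    then have "k * r + r \<le> ?b * r" by (simp add: algebra_simps)
    then have "k * r + r \<le> n" using br_le[of n r] by linarith
    then show "(\<lambda>i. (i, n div 2 - 1)) ` {k*r..<k*r+r} \<subseteq> ?I" using n by auto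
    show "(\<lambda>i. (i, n div 2 - 1)) ` {k*r..<k*r+r} \<noteq> {}" using r by simp
    show "card ((\<lambda>i. (i, n div 2 - 1)) ` {k*r..<k*r+r}) = r"
      by (subst card_image) (auto simp: inj_on_def)
  qed
  have bi: "integrable ?M (\<lambda>Z. max (blkS n r k Z) 0)" if "k < ?b" for k
    unfolding blkS_eq using block_gain(1)[OF fI J(1,2)[OF that]] .
  have bv: "(\<integral>Z. max (blkS n r k Z) 0 \<partial>?M) = sqrt (real r) * sqrt (2/pi) / 2" if "k < ?b" for k
    unfolding blkS_eq using block_gain(2)[OF fI J(1,2)[OF that]] J(3)[OF that] by simp
  have ci: "integrable ?M (\<lambda>Z. Z (i, j))" "(\<integral>Z. Z (i, j) \<partial>?M) = 0" if "i < n" "j < n div 2" for i j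
    using coord_int(1,2)[OF fI, of "(i, j)"] that by auto
  have i1: "integrable ?M (\<lambda>Z. \<Sum>i<n. \<Sum>j<n div 2. Z (i, j))"
    using ci(1) by (intro Bochner_Integration.integrable_sum) auto
  have v1: "(\<integral>Z. (\<Sum>i<n. \<Sum>j<n div 2. Z (i, j)) \<partial>?M) = 0"
    using ci by (subst Bochner_Integration.integral_sum, intro Bochner_Integration.integrable_sum, auto)+
  have i2: "integrable ?M (\<lambda>Z. \<Sum>k<?b. max (blkS n r k Z) 0)"
    using bi by (intro Bochner_Integration.integrable_sum) auto
  have v2: "(\<integral>Z. (\<Sum>k<?b. max (blkS n r k Z) 0) \<partial>?M) = real ?b * (sqrt (real r) * sqrt (2/pi) / 2)"
  proof -
    have "(\<integral>Z. (\<Sum>k<?b. max (blkS n r k Z) 0) \<partial>?M) = (\<Sum>k<?b. (\<integral>Z. max (blkS n r k Z) 0 \<partial>?M))"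
      by (rule Bochner_Integration.integral_sum) (use bi in auto)
    also have "\<dots> = (\<Sum>k<?b. sqrt (real r) * sqrt (2/pi) / 2)"
      by (rule sum.cong) (auto simp: bv)
    finally show ?thesis by simp
  qed
  have ggf: "gg n r = (\<lambda>Z. (?a * (\<Sum>i<n. \<Sum>j<n div 2. Z (i, j)) + (\<Sum>k<?b. max (blkS n r k Z) 0)) / (3 * sqrt (real n)))"
    by (simp add: gg_def fun_eq_iff)
  show "integrable (gauss_matrix n) (gg n r)"
    unfolding gm_eq ggf using i1 i2 by (intro integrable_divide Bochner_Integration.integrable_add integrable_mult_right) auto
  have "integral\<^sup>L ?M (gg n r) = (\<integral>Z. ?a * (\<Sum>i<n. \<Sum>j<n div 2. Z (i, j)) + (\<Sum>k<?b. max (blkS n r k Z) 0) \<partial>?M) / (3 * sqrt (real n))"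
    unfolding ggf by (rule integral_divide_zero)
  also have "(\<integral>Z. ?a * (\<Sum>i<n. \<Sum>j<n div 2. Z (i, j)) + (\<Sum>k<?b. max (blkS n r k Z) 0) \<partial>?M)
     = (\<integral>Z. ?a * (\<Sum>i<n. \<Sum>j<n div 2. Z (i, j)) \<partial>?M) + (\<integral>Z. (\<Sum>k<?b. max (blkS n r k Z) 0) \<partial>?M)"
    by (rule Bochner_Integration.integral_add) (use i1 i2 in auto)
  also have "(\<integral>Z. ?a * (\<Sum>i<n. \<Sum>j<n div 2. Z (i, j)) \<partial>?M) = ?a * (\<integral>Z. (\<Sum>i<n. \<Sum>j<n div 2. Z (i, j)) \<partial>?M)"
    by (rule integral_mult_right_zero)
  finally have "integral\<^sup>L ?M (gg n r) = (?a * 0 + real ?b * (sqrt (real r) * sqrt (2/pi) / 2)) / (3 * sqrt (real n))"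
    unfolding v1 v2 .
  then show "integral\<^sup>L (gauss_matrix n) (gg n r) = real (n div r) * (sqrt (real r) * sqrt (2/pi) / 2) / (3 * sqrt (real n))"
    unfolding gm_eq by simp
qed

lemma sq_le: "(x + y)^2 \<le> 2 * x^2 + 2 * (y::real)^2"
proof -
  have "0 \<le> (x - y)^2" by simp
  then show ?thesis by (simp add: power2_eq_square algebra_simps)
qed

lemma vv_ball:
  assumes n: "n \<ge> 1" and r: "r \<ge> 1" and r1: "r^2 \<le> n" and r2: "n < (r+1)^2"
  shows "vv n r Z \<in> unit_ball n"
proof -
  let ?m = "n div 2" let ?b = "n div r"
  define D where "D = 3 * sqrt (real n)"
  define a where "a = real ?b / real n"
  have D2: "D^2 = 9 * real n" unfolding D_def by (simp add: power_mult_distrib)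
  have Dp: "D > 0" unfolding D_def using n by simp
  have h1: "real ?b * real r \<le> real n" using br_le[of n r] by (metis of_nat_le_iff of_nat_mult)
  have h2: "real n < 4 * (real r)^2"
  proof -
    have e1: "(r+1)^2 = r^2 + 2*r + 1" by (simp add: power2_eq_square algebra_simps)
    have e2: "r \<le> r^2" using r by (simp add: power2_eq_square)
    have e3: "1 \<le> r^2" using r by (simp add: power2_eq_square)
    have "(r+1)^2 \<le> 4 * r^2" using e1 e2 e3 by linarith
    then have "n < 4 * r^2" using r2 by linarith
    then show ?thesis by (metis of_nat_less_iff of_nat_mult of_nat_numeral of_nat_power)
  qed
  have h3: "(real ?b)^2 < 4 * real n"
  proof -
    have "(real ?b * real r)^2 \<le> (real n)^2" using h1 by (intro power_mono) auto
    also have "\<dots> < real n * (4 * (real r)^2)" using h2 n by (simp add: power2_eq_square)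
    finally have "(real ?b)^2 * (real r)^2 < (4 * real n) * (real r)^2" by (simp add: power_mult_distrib algebra_simps)
    then show ?thesis using r by (simp add: mult_less_cancel_right)
  qed
  have h4: "real ?m * a^2 \<le> 2"
  proof -
    have m2: "real ?m \<le> real n / 2" by linarith
    have "real ?m * a^2 = real ?m * (real ?b)^2 / (real n)^2" unfolding a_def by (simp add: power_divide)
    also have "\<dots> \<le> (real n / 2) * (4 * real n) / (real n)^2"
      using m2 h3 n by (intro divide_right_mono mult_mono) auto
    also have "\<dots> = 2" using n by (simp add: power2_eq_square)
    finally show ?thesis .
  qed
  have row: "(\<Sum>j<n. (vv n r Z i j)^2) \<le> (2 * real ?m * a^2 + 2) / D^2" if i: "i < n" for i
  proof -
    have "(\<Sum>j<n. (vv n r Z i j)^2) = (\<Sum>j<n. ((if j < ?m then a else 0) + (if j = ?m - 1 then ee n r Z i else 0))^2) / D^2"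
      unfolding sum_divide_distrib by (rule sum.cong[OF refl]) (use i in \<open>simp add: vv_def a_def D_def power_divide\<close>)
    also have "\<dots> \<le> (\<Sum>j<n. 2 * (if j < ?m then a^2 else 0) + 2 * (if j = ?m - 1 then (ee n r Z i)^2 else 0)) / D^2"
    proof (intro divide_right_mono sum_mono)
      fix j
      show "((if j < ?m then a else 0) + (if j = ?m - 1 then ee n r Z i else 0))^2 \<le> 2 * (if j < ?m then a^2 else 0) + 2 * (if j = ?m - 1 then (ee n r Z i)^2 else 0)"
        using sq_le[of "if j < ?m then a else 0" "if j = ?m - 1 then ee n r Z i else 0"] by (auto split: if_splits)
    qed simp
    also have "\<dots> = (2 * (real ?m * a^2) + 2 * (ee n r Z i)^2) / D^2"
      using n by (simp add: sum.distrib sum_if_lt sum_distrib_left[symmetric])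
    also have "\<dots> \<le> (2 * real ?m * a^2 + 2) / D^2"
      using ee_01[of n r Z i] by (intro divide_right_mono) (auto simp: power_le_one)
    finally show ?thesis .
  qed
  have "(\<Sum>i<n. \<Sum>j<n. (vv n r Z i j)^2) \<le> (\<Sum>i<n. (2 * real ?m * a^2 + 2) / D^2)"
    using row by (intro sum_mono) auto
  also have "\<dots> = real n * (2 * real ?m * a^2 + 2) / (9 * real n)" using D2 by simp
  also have "\<dots> \<le> 1" using h4 n by (simp add: field_simps)
  finally have "(\<Sum>i<n. \<Sum>j<n. (vv n r Z i j)^2) \<le> 1" .
  then show ?thesis unfolding unit_ball_def frob_def using vv_mats by simp
qed


lemma exists_r:
  assumes "n \<ge> (1::nat)"
  shows "\<exists>r\<ge>1. r^2 \<le> n \<and> n < (r+1)^2"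
  using assms
proof (induction n rule: nat_induct_at_least)
  case base
  then show ?case by (intro exI[of _ 1]) (auto simp: power2_eq_square)
next
  case (Suc n)
  then obtain r where r: "r \<ge> 1" "r^2 \<le> n" "n < (r+1)^2" by blast
  show ?case
  proof (cases "Suc n < (r+1)^2")
    case True
    then show ?thesis using r by (intro exI[of _ r]) auto
  next
    case False
    then have e: "Suc n = (r+1)^2" using r by linarith
    have "(r+1)^2 < (r+2)^2" by (simp add: power2_eq_square)
    then show ?thesis using e by (intro exI[of _ "r+1"]) auto
  qed
qed

lemma final_arith:
  fixes n r b :: nat
  assumes n: "n \<ge> 1" and r: "r \<ge> 1" and r1: "r^2 \<le> n" and b: "n \<le> 2 * b * r"
  shows "real n powr (1/4) / 20 \<le> real b * (sqrt (real r) * sqrt (2/pi) / 2) / (3 * sqrt (real n))"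
proof -
  define q where "q = sqrt (sqrt (real n))"
  define x where "x = sqrt (real r)"
  define s where "s = sqrt (2/pi)"
  have qe: "real n powr (1/4) = q"
  proof -
    have "real n powr (1/4) = (real n powr (1/2)) powr (1/2)" by (simp add: powr_powr)
    then show ?thesis unfolding q_def by (simp add: powr_half_sqrt)
  qed
  have q0: "q > 0" unfolding q_def using n by simp
  have q2: "q^2 = sqrt (real n)" unfolding q_def by simp
  have q4: "q^2 * q^2 = real n" using q2 by simp
  have x0: "x > 0" unfolding x_def using r by simp
  have x2: "x^2 = real r" unfolding x_def by simp
  have xq: "x \<le> q"
  proof -
    have "real r \<le> sqrt (real n)" using r1 by (intro real_le_rsqrt) (metis of_nat_le_iff of_nat_power)
    then show ?thesis unfolding x_def q_def by (rule real_sqrt_le_mono)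
  qed
  have s6: "s \<ge> 0.6"
  proof -
    have "0.36 \<le> 2 / pi" using pi_less_4 pi_gt_zero by (simp add: field_simps)
    then have "sqrt 0.36 \<le> s" unfolding s_def by (rule real_sqrt_le_mono)
    moreover have "sqrt 0.36 = (0.6::real)" by (rule real_sqrt_unique) (simp_all add: power2_eq_square)
    ultimately show ?thesis by simp
  qed
  have bn: "real n \<le> 2 * real b * real r" using b by (metis of_nat_le_iff of_nat_mult of_nat_numeral)
  have bx: "real b * x * q \<ge> q^2 * q^2 / 2"
  proof -
    have bxx: "real b * x * x = real b * real r" using x2 by (metis power2_eq_square mult.assoc)
    have "q^2 * q^2 / 2 \<le> real b * x * x" unfolding bxx q4 using bn by linarith
    also have "\<dots> \<le> real b * x * q" using xq x0 by (intro mult_left_mono) auto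
    finally show ?thesis .
  qed
  have bx': "real b * x \<ge> q^3 / 2"
  proof -
    have "q^3 / 2 * q = q^2 * q^2 / 2" by (simp add: power2_eq_square power3_eq_cube)
    then have "q^3 / 2 * q \<le> real b * x * q" using bx by simp
    then show ?thesis using q0 by simp
  qed
  have "q / 20 \<le> real b * (x * s / 2) / (3 * q^2)"
  proof -
    have "q / 20 = (q^3 / 2) * 0.6 / (6 * q^2)" using q0 by (simp add: power2_eq_square power3_eq_cube field_simps)
    also have "\<dots> \<le> (real b * x) * s / (6 * q^2)"
      using bx' s6 q0 x0 by (intro divide_right_mono mult_mono) auto
    also have "\<dots> = real b * (x * s / 2) / (3 * q^2)" by (simp add: field_simps)
    finally show ?thesis .
  qed
  then show ?thesis unfolding qe x_def s_def q2 .
qed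

theorem lemma5p4:
  shows "\<exists>c>0. \<forall>n\<ge>1.
     GW n (tangent_cone n (TV n (theta_star n)) (theta_star n) \<inter> unit_ball n)
       \<ge> c * real n powr (1/4)"
proof (intro exI[of _ "1/20"] conjI allI impI)
  fix n :: nat assume n: "n \<ge> 1"
  obtain r where r: "r \<ge> 1" "r^2 \<le> n" "n < (r+1)^2" using exists_r[OF n] by blast
  let ?A = "tangent_cone n (TV n (theta_star n)) (theta_star n) \<inter> unit_ball n"
  have le: "integral\<^sup>L (gauss_matrix n) (gg n r) \<le> GW n ?A"
  proof (rule gw_lower)
    show "?A \<subseteq> unit_ball n" by auto
    fix Z
    show "vv n r Z \<in> ?A" using vv_tangent[OF n r(1)] vv_ball[OF n r] by simp
    show "gg n r Z = LL n Z (vv n r Z)" unfolding LL_def using LL_vv[OF n r(1)] by simp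
  qed (rule gg_int(1)[OF n r(1)])
  have b: "n \<le> 2 * (n div r) * r"
  proof -
    have "r * r \<le> n" using r(2) by (simp add: power2_eq_square)
    then have "r \<le> n div r" using div_le_mono[of "r*r" n r] r(1) by simp
    then have "r * 1 \<le> (n div r) * r" using r(1) by (metis le_trans mult.commute mult_le_mono1 nat_mult_1_right order_refl) 
    moreover have "n mod r < r" using r(1) by simp
    moreover have "n = (n div r) * r + n mod r" by simp
    ultimately show ?thesis by linarith
  qed
  have f: "real n powr (1/4) / 20 \<le> integral\<^sup>L (gauss_matrix n) (gg n r)"
    using final_arith[OF n r(1) r(2) b] gg_int(2)[OF n r(1)] by simp
  have "1/20 * real n powr (1/4) = real n powr (1/4) / 20" by simp
  then show "1/20 * real n powr (1/4) \<le> GW n ?A"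
    using f le by linarith
qed simp


end
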